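(* Let $f(t)=t^6+r_1t^5+r_2t^4+r_3t^3+r_4t^2+r_5t+r_6\in\mathbb{R}[t]$ and suppose that all roots of $f$ (counted in $\mathbb{C}$) are real and strictly positive. Then: (1) $r_1<0$; (2) $r_2>0$ and $r_2\le \frac{5}{12}r_1^2$; (3) $r_3<0$ and, writing $D=25r_1^2-60r_2$ (which is $\ge 0$ by (2)), $$-\tfrac13 r_1^2\sqrt{D}+\tfrac{1}{225}D^{3/2}+\tfrac45 r_2\sqrt{D}\;\le\;\tfrac{10}{9}r_1^3-4r_1r_2+6r_3\;\le\;\tfrac13 r_1^2\sqrt{D}-\tfrac{1}{225}D^{3/2}-\tfrac45 r_2\sqrt{D};$$ (4) $r_4>0$; (5) $r_5<0$. *)

theory Defs
  imports Complex_Main "HOL-Computational_Algebra.Polynomial"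
begin

end

theory Submission
  imports Defs "HOL-Computational_Algebra.Computational_Algebra"
begin

lemma ybound:
  fixes y0 y1 y2 y3 y4 y5 :: real
  assumes "y0 + y1 + y2 + y3 + y4 + y5 = 0"
  shows "6 * y0^2 \<le> 5 * (y0^2 + y1^2 + y2^2 + y3^2 + y4^2 + y5^2)"
proof -
  have y0: "y0 = -(y1 + y2 + y3 + y4 + y5)" using assms by linarith
  have "5 * (y0^2 + y1^2 + y2^2 + y3^2 + y4^2 + y5^2) - 6 * y0^2 =
    (y1-y2)^2 + (y1-y3)^2 + (y1-y4)^2 + (y1-y5)^2 + (y2-y3)^2 + (y2-y4)^2 + (y2-y5)^2
    + (y3-y4)^2 + (y3-y5)^2 + (y4-y5)^2"
    unfolding y0 by (simp add: power2_eq_square algebra_simps)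
  moreover have "0 \<le> (y1-y2)^2 + (y1-y3)^2 + (y1-y4)^2 + (y1-y5)^2 + (y2-y3)^2 + (y2-y4)^2 + (y2-y5)^2
    + (y3-y4)^2 + (y3-y5)^2 + (y4-y5)^2" by simp
  ultimately show ?thesis by linarith
qed

lemma cub:
  fixes y c :: real
  assumes "\<bar>y\<bar> \<le> c"
  shows "y^3 \<le> 3*c/5 * y^2 + 9*c^2/25 * y + c^3/25"
    and "-(y^3) \<le> 3*c/5 * y^2 - 9*c^2/25 * y + c^3/25"
proof -
  have "0 \<le> (c - y) * (y + c/5)^2" using assms by simp
  moreover have "(c - y) * (y + c/5)^2 = 3*c/5 * y^2 + 9*c^2/25 * y + c^3/25 - y^3"
    by (simp add: field_simps power2_eq_square power3_eq_cube)
  ultimately show "y^3 \<le> 3*c/5 * y^2 + 9*c^2/25 * y + c^3/25" by linarith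
  have "0 \<le> (c + y) * (y - c/5)^2" using assms by simp
  moreover have "(c + y) * (y - c/5)^2 = 3*c/5 * y^2 - 9*c^2/25 * y + c^3/25 + y^3"
    by (simp add: field_simps power2_eq_square power3_eq_cube)
  ultimately show "-(y^3) \<le> 3*c/5 * y^2 - 9*c^2/25 * y + c^3/25" by linarith
qed

lemma absle: fixes y c :: real assumes "6 * y^2 \<le> 6 * c^2" "0 \<le> c" shows "\<bar>y\<bar> \<le> c"
  using assms by (metis abs_of_nonneg abs_le_square_iff mult_le_cancel_left_pos zero_less_numeral)

lemma core:
  fixes a0 a1 a2 a3 a4 a5 r1 r2 r3 D :: real
  assumes e1: "r1 = -(a0 + a1 + a2 + a3 + a4 + a5)"
  and e2: "r2 = a0*a1 + a0*a2 + a0*a3 + a0*a4 + a0*a5 + a1*a2 + a1*a3 + a1*a4 + a1*a5 + a2*a3 + a2*a4 + a2*a5 + a3*a4 + a3*a5 + a4*a5"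
  and e3: "r3 = -(a0*a1*a2 + a0*a1*a3 + a0*a1*a4 + a0*a1*a5 + a0*a2*a3 + a0*a2*a4 + a0*a2*a5 + a0*a3*a4 + a0*a3*a5 + a0*a4*a5 + a1*a2*a3 + a1*a2*a4 + a1*a2*a5 + a1*a3*a4 + a1*a3*a5 + a1*a4*a5 + a2*a3*a4 + a2*a3*a5 + a2*a4*a5 + a3*a4*a5)"
  and D_def: "D = 25 * r1^2 - 60 * r2"
  shows "r2 \<le> 5/12 * r1^2 \<and>
         - (1/3) * r1^2 * sqrt D + 1/225 * D powr (3/2) + 4/5 * r2 * sqrt D
            \<le> 10/9 * r1^3 - 4 * r1 * r2 + 6 * r3 \<and>
         10/9 * r1^3 - 4 * r1 * r2 + 6 * r3
            \<le> 1/3 * r1^2 * sqrt D - 1/225 * D powr (3/2) - 4/5 * r2 * sqrt D"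
proof -
  define m where "m = (a0 + a1 + a2 + a3 + a4 + a5) / 6"
  define y0 where "y0 = a0 - m"
  define y1 where "y1 = a1 - m"
  define y2 where "y2 = a2 - m"
  define y3 where "y3 = a3 - m"
  define y4 where "y4 = a4 - m"
  define y5 where "y5 = a5 - m"
  define S where "S = y0^2 + y1^2 + y2^2 + y3^2 + y4^2 + y5^2"
  define T where "T = y0^3 + y1^3 + y2^3 + y3^3 + y4^3 + y5^3"
  have ys: "y0 + y1 + y2 + y3 + y4 + y5 = 0" unfolding y0_def y1_def y2_def y3_def y4_def y5_def m_def
    by (simp add: field_simps)
  have DS: "D = 30 * S"
    unfolding D_def e1 e2 S_def y0_def y1_def y2_def y3_def y4_def y5_def m_def
    by (simp add: power2_eq_square algebra_simps)
  have MT: "10/9 * r1^3 - 4 * r1 * r2 + 6 * r3 = -2 * T"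
    unfolding T_def e1 e2 e3 y0_def y1_def y2_def y3_def y4_def y5_def m_def
    by (simp add: field_simps power2_eq_square power3_eq_cube)
  have S0: "S \<ge> 0" unfolding S_def by simp
  hence D0: "D \<ge> 0" using DS by simp
  define c where "c = sqrt D / 6"
  have c0: "c \<ge> 0" unfolding c_def using D0 by simp
  have sD: "sqrt D = 6 * c" unfolding c_def by simp
  have cc: "6 * c^2 = 5 * S"
  proof -
    have "(sqrt D)^2 = D" using D0 by simp
    hence "(6*c)^2 = D" by (simp only: sD)
    hence "(6*c)^2 = 30 * S" using DS by simp
    hence "36 * c^2 = 30 * S" by (simp add: power_mult_distrib)
    thus ?thesis by linarith
  qed
  have Dp: "D powr (3/2) = D * sqrt D"
  proof (cases "D = 0")
    case True thus ?thesis by simp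
  next
    case False
    hence "D > 0" using D0 by simp
    have "D powr (3/2) = D powr (1 + 1/2)" by simp
    also have "\<dots> = D powr 1 * D powr (1/2)" by (rule powr_add)
    finally show ?thesis using \<open>D > 0\<close> by (simp add: powr_half_sqrt)
  qed
  have yb0: "\<bar>y0\<bar> \<le> c" using ybound[OF ys] cc c0 S_def absle by simp
  have yb1: "\<bar>y1\<bar> \<le> c" using ybound[of y1 y0 y2 y3 y4 y5] ys cc c0 S_def absle by (simp add: algebra_simps)
  have yb2: "\<bar>y2\<bar> \<le> c" using ybound[of y2 y0 y1 y3 y4 y5] ys cc c0 S_def absle by (simp add: algebra_simps)
  have yb3: "\<bar>y3\<bar> \<le> c" using ybound[of y3 y0 y1 y2 y4 y5] ys cc c0 S_def absle by (simp add: algebra_simps)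
  have yb4: "\<bar>y4\<bar> \<le> c" using ybound[of y4 y0 y1 y2 y3 y5] ys cc c0 S_def absle by (simp add: algebra_simps)
  have yb5: "\<bar>y5\<bar> \<le> c" using ybound[of y5 y0 y1 y2 y3 y4] ys cc c0 S_def absle by (simp add: algebra_simps)
  have cS: "3*c/5 * y0^2 + 3*c/5 * y1^2 + 3*c/5 * y2^2 + 3*c/5 * y3^2 + 3*c/5 * y4^2 + 3*c/5 * y5^2 = 18/25 * c^3"
  proof -
    have "3*c/5 * y0^2 + 3*c/5 * y1^2 + 3*c/5 * y2^2 + 3*c/5 * y3^2 + 3*c/5 * y4^2 + 3*c/5 * y5^2 = 3*c/5 * S"
      unfolding S_def by (simp add: algebra_simps)
    also have "\<dots> = 3*c/5 * (6/5 * c^2)" using cc by simp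
    finally show ?thesis by (simp add: power2_eq_square power3_eq_cube)
  qed
  have cy: "9*c^2/25 * y0 + 9*c^2/25 * y1 + 9*c^2/25 * y2 + 9*c^2/25 * y3 + 9*c^2/25 * y4 + 9*c^2/25 * y5 = 0"
  proof -
    have "9*c^2/25 * y0 + 9*c^2/25 * y1 + 9*c^2/25 * y2 + 9*c^2/25 * y3 + 9*c^2/25 * y4 + 9*c^2/25 * y5
      = 9*c^2/25 * (y0 + y1 + y2 + y3 + y4 + y5)" by (simp add: algebra_simps)
    thus ?thesis using ys by simp
  qed
  have Tu: "T \<le> 24/25 * c^3"
    using cub(1)[OF yb0] cub(1)[OF yb1] cub(1)[OF yb2] cub(1)[OF yb3] cub(1)[OF yb4] cub(1)[OF yb5] cS cy
    unfolding T_def by linarith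
  have Tl: "-T \<le> 24/25 * c^3"
    using cub(2)[OF yb0] cub(2)[OF yb1] cub(2)[OF yb2] cub(2)[OF yb3] cub(2)[OF yb4] cub(2)[OF yb5] cS cy
    unfolding T_def by linarith
  have r2D: "r2 = (25 * r1^2 - 36 * c^2) / 60"
  proof -
    have "D = 36 * c^2" using cc DS by simp
    thus ?thesis using D_def by simp
  qed
  have R: "1/3 * r1^2 * sqrt D - 1/225 * D powr (3/2) - 4/5 * r2 * sqrt D = 48/25 * c^3"
  proof -
    have "D = 36 * c^2" using cc DS by simp
    thus ?thesis unfolding Dp sD r2D by (simp add: power2_eq_square power3_eq_cube field_simps)
  qed
  have L: "- (1/3) * r1^2 * sqrt D + 1/225 * D powr (3/2) + 4/5 * r2 * sqrt D = -(48/25 * c^3)"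
    using R by linarith
  show ?thesis using D0 D_def L R MT Tu Tl by simp
qed
lemma factor6:
  fixes r1 r2 r3 r4 r5 r6 :: real and f :: "real poly"
  assumes f_def: "f = [:r6, r5, r4, r3, r2, r1, 1:]"
    and roots: "\<forall>z::complex. poly (map_poly complex_of_real f) z = 0 \<longrightarrow> z \<in> \<real> \<and> 0 < Re z"
  shows "\<exists>a0 a1 a2 a3 a4 a5. a0 > 0 \<and> a1 > 0 \<and> a2 > 0 \<and> a3 > 0 \<and> a4 > 0 \<and> a5 > 0 \<and>
     r1 = -(a0 + a1 + a2 + a3 + a4 + a5) \<and>
     r2 = a0*a1 + a0*a2 + a0*a3 + a0*a4 + a0*a5 + a1*a2 + a1*a3 + a1*a4 + a1*a5 + a2*a3 + a2*a4 + a2*a5 + a3*a4 + a3*a5 + a4*a5 \<and>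
     r3 = -(a0*a1*a2 + a0*a1*a3 + a0*a1*a4 + a0*a1*a5 + a0*a2*a3 + a0*a2*a4 + a0*a2*a5 + a0*a3*a4 + a0*a3*a5 + a0*a4*a5 + a1*a2*a3 + a1*a2*a4 + a1*a2*a5 + a1*a3*a4 + a1*a3*a5 + a1*a4*a5 + a2*a3*a4 + a2*a3*a5 + a2*a4*a5 + a3*a4*a5) \<and>
     r4 = a0*a1*a2*a3 + a0*a1*a2*a4 + a0*a1*a2*a5 + a0*a1*a3*a4 + a0*a1*a3*a5 + a0*a1*a4*a5 + a0*a2*a3*a4 + a0*a2*a3*a5 + a0*a2*a4*a5 + a0*a3*a4*a5 + a1*a2*a3*a4 + a1*a2*a3*a5 + a1*a2*a4*a5 + a1*a3*a4*a5 + a2*a3*a4*a5 \<and>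
     r5 = -(a0*a1*a2*a3*a4 + a0*a1*a2*a3*a5 + a0*a1*a2*a4*a5 + a0*a1*a3*a4*a5 + a0*a2*a3*a4*a5 + a1*a2*a3*a4*a5)"
proof -
  define p where "p = map_poly complex_of_real f"
  have pe: "p = [:of_real r6, of_real r5, of_real r4, of_real r3, of_real r2, of_real r1, 1:]"
    unfolding p_def f_def by (simp add: map_poly_pCons)
  have dp: "degree p = 6" unfolding pe by simp
  have lp: "lead_coeff p = 1" unfolding pe dp by simp
  obtain root where rt: "smult (lead_coeff p) (\<Prod>i<degree p. [:-root i, 1:]) = p"
    using complex_poly_decompose' by blast
  hence pr: "p = (\<Prod>i<6. [:-root i, 1:])" using dp lp by simp
  have isr: "root i \<in> \<real> \<and> 0 < Re (root i)" if "i < 6" for i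
  proof -
    have "poly p (root i) = 0" unfolding pr poly_prod
      using that by (auto intro!: prod_zero)
    thus ?thesis using roots p_def by blast
  qed
  define a where "a i = Re (root i)" for i
  have ra: "root i = of_real (a i)" if "i < 6" for i
    using isr[OF that] unfolding a_def by (auto simp: Reals_def) 
  have apos: "a i > 0" if "i < 6" for i using isr[OF that] a_def by simp
  have C: "[:of_real r6, of_real r5, of_real r4, of_real r3, of_real r2, of_real r1, 1:] = (\<Prod>i<6. [:-complex_of_real (a i), 1:])"
    unfolding pe[symmetric] pr
    by (rule prod.cong) (auto simp: ra)
  have C2: "[:of_real r6, of_real r5, of_real r4, of_real r3, of_real r2, of_real r1, 1:] =
     [:-complex_of_real (a 0), 1:] * [:-complex_of_real (a 1), 1:] * [:-complex_of_real (a 2), 1:] * [:-complex_of_real (a 3), 1:] * [:-complex_of_real (a 4), 1:] * [:-complex_of_real (a 5), 1:]"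
    unfolding C by (simp add: eval_nat_numeral prod.lessThan_Suc)
  define a0 where "a0 = a 0"
  define a1 where "a1 = a 1"
  define a2 where "a2 = a 2"
  define a3 where "a3 = a 3"
  define a4 where "a4 = a 4"
  define a5 where "a5 = a 5"
  note C3 = C2[folded a0_def a1_def a2_def a3_def a4_def a5_def]
  have "complex_of_real r1 = of_real (-(a0 + a1 + a2 + a3 + a4 + a5))"
    using C3 by (simp add: algebra_simps)
  hence e1: "r1 = -(a0 + a1 + a2 + a3 + a4 + a5)" using of_real_eq_iff by blast
  have "complex_of_real r2 = of_real (a0*a1 + a0*a2 + a0*a3 + a0*a4 + a0*a5 + a1*a2 + a1*a3 + a1*a4 + a1*a5 + a2*a3 + a2*a4 + a2*a5 + a3*a4 + a3*a5 + a4*a5)"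
    using C3 by (simp add: algebra_simps)
  hence e2: "r2 = a0*a1 + a0*a2 + a0*a3 + a0*a4 + a0*a5 + a1*a2 + a1*a3 + a1*a4 + a1*a5 + a2*a3 + a2*a4 + a2*a5 + a3*a4 + a3*a5 + a4*a5" using of_real_eq_iff by blast
  have "complex_of_real r3 = of_real (-(a0*a1*a2 + a0*a1*a3 + a0*a1*a4 + a0*a1*a5 + a0*a2*a3 + a0*a2*a4 + a0*a2*a5 + a0*a3*a4 + a0*a3*a5 + a0*a4*a5 + a1*a2*a3 + a1*a2*a4 + a1*a2*a5 + a1*a3*a4 + a1*a3*a5 + a1*a4*a5 + a2*a3*a4 + a2*a3*a5 + a2*a4*a5 + a3*a4*a5))"
    using C3 by (simp add: algebra_simps)
  hence e3: "r3 = -(a0*a1*a2 + a0*a1*a3 + a0*a1*a4 + a0*a1*a5 + a0*a2*a3 + a0*a2*a4 + a0*a2*a5 + a0*a3*a4 + a0*a3*a5 + a0*a4*a5 + a1*a2*a3 + a1*a2*a4 + a1*a2*a5 + a1*a3*a4 + a1*a3*a5 + a1*a4*a5 + a2*a3*a4 + a2*a3*a5 + a2*a4*a5 + a3*a4*a5)" using of_real_eq_iff by blast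
  have "complex_of_real r4 = of_real (a0*a1*a2*a3 + a0*a1*a2*a4 + a0*a1*a2*a5 + a0*a1*a3*a4 + a0*a1*a3*a5 + a0*a1*a4*a5 + a0*a2*a3*a4 + a0*a2*a3*a5 + a0*a2*a4*a5 + a0*a3*a4*a5 + a1*a2*a3*a4 + a1*a2*a3*a5 + a1*a2*a4*a5 + a1*a3*a4*a5 + a2*a3*a4*a5)"
    using C3 by (simp add: algebra_simps)
  hence e4: "r4 = a0*a1*a2*a3 + a0*a1*a2*a4 + a0*a1*a2*a5 + a0*a1*a3*a4 + a0*a1*a3*a5 + a0*a1*a4*a5 + a0*a2*a3*a4 + a0*a2*a3*a5 + a0*a2*a4*a5 + a0*a3*a4*a5 + a1*a2*a3*a4 + a1*a2*a3*a5 + a1*a2*a4*a5 + a1*a3*a4*a5 + a2*a3*a4*a5" using of_real_eq_iff by blast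
  have "complex_of_real r5 = of_real (-(a0*a1*a2*a3*a4 + a0*a1*a2*a3*a5 + a0*a1*a2*a4*a5 + a0*a1*a3*a4*a5 + a0*a2*a3*a4*a5 + a1*a2*a3*a4*a5))"
    using C3 by (simp add: algebra_simps)
  hence e5: "r5 = -(a0*a1*a2*a3*a4 + a0*a1*a2*a3*a5 + a0*a1*a2*a4*a5 + a0*a1*a3*a4*a5 + a0*a2*a3*a4*a5 + a1*a2*a3*a4*a5)" using of_real_eq_iff by blast
  have "a0 > 0" "a1 > 0" "a2 > 0" "a3 > 0" "a4 > 0" "a5 > 0"
    using apos by (auto simp: a0_def a1_def a2_def a3_def a4_def a5_def)
  thus ?thesis using e1 e2 e3 e4 e5 by blast
qed
theorem mainTheorem1:
  fixes r1 r2 r3 r4 r5 r6 :: real and f :: "real poly" and D :: real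
  assumes f_def: "f = [:r6, r5, r4, r3, r2, r1, 1:]"
    and roots: "\<forall>z::complex. poly (map_poly complex_of_real f) z = 0 \<longrightarrow> z \<in> \<real> \<and> 0 < Re z"
    and D_def: "D = 25 * r1^2 - 60 * r2"
  shows "r1 < 0 \<and>
         (r2 > 0 \<and> r2 \<le> 5/12 * r1^2) \<and>
         (r3 < 0 \<and>
         - (1/3) * r1^2 * sqrt D + 1/225 * D powr (3/2) + 4/5 * r2 * sqrt D
            \<le> 10/9 * r1^3 - 4 * r1 * r2 + 6 * r3 \<and>
         10/9 * r1^3 - 4 * r1 * r2 + 6 * r3
            \<le> 1/3 * r1^2 * sqrt D - 1/225 * D powr (3/2) - 4/5 * r2 * sqrt D) \<and>
         r4 > 0 \<and> r5 < 0"
proof -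
  obtain a0 a1 a2 a3 a4 a5 where p: "a0 > 0" "a1 > 0" "a2 > 0" "a3 > 0" "a4 > 0" "a5 > 0"
   and e1: "r1 = -(a0 + a1 + a2 + a3 + a4 + a5)"
   and e2: "r2 = a0*a1 + a0*a2 + a0*a3 + a0*a4 + a0*a5 + a1*a2 + a1*a3 + a1*a4 + a1*a5 + a2*a3 + a2*a4 + a2*a5 + a3*a4 + a3*a5 + a4*a5"
   and e3: "r3 = -(a0*a1*a2 + a0*a1*a3 + a0*a1*a4 + a0*a1*a5 + a0*a2*a3 + a0*a2*a4 + a0*a2*a5 + a0*a3*a4 + a0*a3*a5 + a0*a4*a5 + a1*a2*a3 + a1*a2*a4 + a1*a2*a5 + a1*a3*a4 + a1*a3*a5 + a1*a4*a5 + a2*a3*a4 + a2*a3*a5 + a2*a4*a5 + a3*a4*a5)"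
   and e4: "r4 = a0*a1*a2*a3 + a0*a1*a2*a4 + a0*a1*a2*a5 + a0*a1*a3*a4 + a0*a1*a3*a5 + a0*a1*a4*a5 + a0*a2*a3*a4 + a0*a2*a3*a5 + a0*a2*a4*a5 + a0*a3*a4*a5 + a1*a2*a3*a4 + a1*a2*a3*a5 + a1*a2*a4*a5 + a1*a3*a4*a5 + a2*a3*a4*a5"
   and e5: "r5 = -(a0*a1*a2*a3*a4 + a0*a1*a2*a3*a5 + a0*a1*a2*a4*a5 + a0*a1*a3*a4*a5 + a0*a2*a3*a4*a5 + a1*a2*a3*a4*a5)"
    using factor6[OF f_def roots] by blast
  have C: "r2 \<le> 5/12 * r1^2 \<and>
         - (1/3) * r1^2 * sqrt D + 1/225 * D powr (3/2) + 4/5 * r2 * sqrt D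
            \<le> 10/9 * r1^3 - 4 * r1 * r2 + 6 * r3 \<and>
         10/9 * r1^3 - 4 * r1 * r2 + 6 * r3
            \<le> 1/3 * r1^2 * sqrt D - 1/225 * D powr (3/2) - 4/5 * r2 * sqrt D"
    by (rule core[OF e1 e2 e3 D_def])
  have "r1 < 0" using e1 p by linarith
  moreover have "r2 > 0" unfolding e2 using p by (simp add: add_pos_pos)
  moreover have "r3 < 0" unfolding e3 neg_less_0_iff_less using p by (simp add: add_pos_pos)
  moreover have "r4 > 0" unfolding e4 using p by (simp add: add_pos_pos)
  moreover have "r5 < 0" unfolding e5 neg_less_0_iff_less using p by (simp add: add_pos_pos)
  ultimately show ?thesis using C by blast
qed

end
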